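(* Let $n,t,k$ be integers with $n\geq 2t\geq 2$ and $k\geq 2$. Then \[P_k(n,t)\leq P_k(t)\,A_k(n-2t,0^t),\] where $0^t$ denotes the word consisting of $t$ zeros.
   Context: Words are over $\Sigma_k=\{0,1,\ldots,k-1\}$. A border of a word $w$ is a non-empty word that is both a proper prefix and a proper suffix of $w$. A word $w$ is closed by a word $u$ if $u$ is a border of $w$ and $u$ occurs exactly twice in $w$ as a factor (overlapping occurrences counted). A word $w$ is privileged if $|w|\leq 1$ or if $w$ is closed by some privileged word. $P_k(m)$ denotes the number of privileged words of length $m$ over $\Sigma_k$, and $P_k(n,t)$ denotes the number of privileged words of length $n$ over $\Sigma_k$ that are closed by a privileged word of length $t$. $A_k(m,v)$ denotes the number of words of length $m$ over $\Sigma_k$ that do not contain $v$ as a factor (for $m=0$ the empty word is counted). *)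

theory Defs
  imports Main "HOL-Library.Sublist"
begin

definition words :: "nat \<Rightarrow> nat \<Rightarrow> nat list set" where
  "words k m = {w. length w = m \<and> set w \<subseteq> {..<k}}"

definition occ :: "nat list \<Rightarrow> nat list \<Rightarrow> nat" where
  "occ u w = card {i. i + length u \<le> length w \<and> take (length u) (drop i w) = u}"

definition is_border :: "nat list \<Rightarrow> nat list \<Rightarrow> bool" where
  "is_border u w \<longleftrightarrow> u \<noteq> [] \<and> strict_prefix u w \<and> strict_suffix u w"

definition closed_by :: "nat list \<Rightarrow> nat list \<Rightarrow> bool" where
  "closed_by w u \<longleftrightarrow> is_border u w \<and> occ u w = 2"

(* privileged words (inductive; well-founded since a border is strictly shorter) *)
inductive privileged :: "nat list \<Rightarrow> bool" where
  short: "length w \<le> 1 \<Longrightarrow> privileged w"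
| closed: "closed_by w u \<Longrightarrow> privileged u \<Longrightarrow> privileged w"

definition P :: "nat \<Rightarrow> nat \<Rightarrow> nat" where
  "P k m = card {w \<in> words k m. privileged w}"

definition P2 :: "nat \<Rightarrow> nat \<Rightarrow> nat \<Rightarrow> nat" where
  "P2 k n t = card {w \<in> words k n. privileged w \<and>
      (\<exists>u. length u = t \<and> privileged u \<and> closed_by w u)}"

definition A :: "nat \<Rightarrow> nat \<Rightarrow> nat list \<Rightarrow> nat" where
  "A k m v = card {w \<in> words k m. \<not> sublist v w}"

end

theory Submission
  imports Defs
begin

definition av :: "nat \<Rightarrow> nat \<Rightarrow> nat list \<Rightarrow> nat list set" where
  "av k m u = {w \<in> words k m. \<not> sublist u w}"

lemma fin_words: "finite (words k m)"
proof -
  have "words k m = {xs. set xs \<subseteq> {..<k} \<and> length xs = m}" by (auto simp: words_def)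
  thus ?thesis using finite_lists_length_eq[of "{..<k}" m] by simp
qed

lemma fin_av: "finite (av k m u)"
  using fin_words[of k m] unfolding av_def by auto

lemma A_av: "A k m u = card (av k m u)" by (simp add: A_def av_def)

lemma sub_trans: "sublist u x' \<Longrightarrow> sublist x' x \<Longrightarrow> sublist u x"
  unfolding sublist_def by (metis append.assoc)

lemma avoid_step:
  assumes u: "u \<in> words k t" and t: "t \<ge> 1" and m: "m \<ge> t"
  shows "card (av k m u) \<le> (\<Sum>d=1..t. (k-1) * card (av k (m-d) u))"
proof -
  define g where "g = (\<lambda>(d::nat,(x'::nat list,c::nat)). x' @ c # drop (t-d+1) u)"
  define B where "B d = av k (m-d) u \<times> ({..<k} - {u!(t-d)})" for d
  have lu: "length u = t" and su: "set u \<subseteq> {..<k}" using u by (auto simp: words_def)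
  have sub: "av k m u \<subseteq> g ` Sigma {1..t} B"
  proof
    fix x assume "x \<in> av k m u"
    hence lx: "length x = m" and sx: "set x \<subseteq> {..<k}" and nx: "\<not> sublist u x"
      by (auto simp: av_def words_def)
    define y where "y = drop (m-t) x"
    have ly: "length y = t" using lx m by (simp add: y_def)
    have xy: "x = take (m-t) x @ y" by (simp add: y_def)
    have "y \<noteq> u" using nx xy by (metis sublist_append_leftI)
    define J where "J = {i. i < t \<and> y!i \<noteq> u!i}"
    have "J \<noteq> {}"
    proof
      assume "J = {}"
      hence "y = u" using ly lu by (intro nth_equalityI) (auto simp: J_def)
      with \<open>y \<noteq> u\<close> show False by simp
    qed
    have fJ: "finite J" by (simp add: J_def)
    define j where "j = Max J"
    have jJ: "j \<in> J" using fJ \<open>J \<noteq> {}\<close> by (simp add: j_def)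
    hence jt: "j < t" and yj: "y!j \<noteq> u!j" by (auto simp: J_def)
    have after: "y!i = u!i" if "j < i" "i < t" for i
    proof (rule ccontr)
      assume "y!i \<noteq> u!i"
      hence "i \<in> J" using that by (simp add: J_def)
      hence "i \<le> j" using fJ by (simp add: j_def)
      with that show False by simp
    qed
    have dd: "drop (j+1) y = drop (j+1) u"
      using ly lu jt by (intro nth_equalityI) (auto intro!: after)
    have y2: "y = take j y @ y!j # drop (j+1) y"
      using jt ly by (simp add: id_take_nth_drop)
    define d where "d = t - j"
    have d1: "d \<in> {1..t}" using jt by (auto simp: d_def)
    have tk: "take (m-d) x = take (m-t) x @ take j y"
      using m jt by (simp add: d_def y_def take_add[symmetric])
    have cx: "x!(m-d) = y!j" using m jt lx by (simp add: d_def y_def)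
    have xe: "x = take (m-d) x @ x!(m-d) # drop (t-d+1) u"
      using xy y2 dd tk cx jt by (simp add: d_def)
    have "take (m-d) x \<in> av k (m-d) u"
    proof -
      have "set (take (m-d) x) \<subseteq> {..<k}" using sx by (meson order_trans set_take_subset)
      moreover have "\<not> sublist u (take (m-d) x)" using nx sub_trans sublist_take by blast
      ultimately show ?thesis using lx by (auto simp: av_def words_def)
    qed
    moreover have "x!(m-d) \<in> set x" using lx m d1 by (intro nth_mem) auto
    hence "x!(m-d) < k" using sx by auto
    moreover have "x!(m-d) \<in> {..<k} - {u!(t-d)}"
      using calculation(2) yj cx sx lx m d1 jt by (auto simp: d_def)
    ultimately have "(d, (take (m-d) x, x!(m-d))) \<in> Sigma {1..t} B" using d1 by (simp add: B_def)
    moreover have "g (d, (take (m-d) x, x!(m-d))) = x" using xe by (simp add: g_def)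
    ultimately show "x \<in> g ` Sigma {1..t} B" by (metis image_eqI)
  qed
  have fS: "finite (Sigma {1..t} B)" by (auto simp: B_def fin_av)
  have "card (av k m u) \<le> card (g ` Sigma {1..t} B)"
    using sub fS by (intro card_mono) auto
  also have "\<dots> \<le> card (Sigma {1..t} B)" using fS card_image_le by blast
  also have "\<dots> = (\<Sum>d=1..t. card (B d))" by (rule card_SigmaI) (auto simp: B_def fin_av)
  also have "\<dots> = (\<Sum>d=1..t. (k-1) * card (av k (m-d) u))"
  proof (rule sum.cong)
    fix d assume "d \<in> {1..t}"
    hence "u!(t-d) \<in> set u" using lu by (intro nth_mem) auto
    hence "u!(t-d) \<in> {..<k}" using su by auto
    thus "card (B d) = (k-1) * card (av k (m-d) u)"
      by (simp add: B_def card_cartesian_product)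
  qed simp
  finally show ?thesis .
qed

lemma zero_ext:
  assumes "\<not> sublist (replicate t (0::nat)) x'" "c \<noteq> 0" "1 \<le> d" "d \<le> t"
  shows "\<not> sublist (replicate t 0) (x' @ c # replicate (d-1) 0)"
proof
  assume "sublist (replicate t 0) (x' @ c # replicate (d-1) 0)"
  then consider (a) "sublist (replicate t 0) x'" | (b) "sublist (replicate t 0) (c # replicate (d-1) 0)"
    | (c) xs1 xs2 where "replicate t 0 = xs1 @ xs2" "suffix xs1 x'" "prefix xs2 (c # replicate (d-1) 0)"
    unfolding sublist_append by blast
  thus False
  proof cases
    case a thus False using assms by simp
  next
    case b
    then consider "prefix (replicate t (0::nat)) (c # replicate (d-1) 0)" | "sublist (replicate t (0::nat)) (replicate (d-1) 0)"
      using b unfolding sublist_Cons_right by blast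
    thus False
    proof cases
      case 1 thus False using assms by (cases t) auto
    next
      case 2 thus False using sublist_length_le assms by fastforce
    qed
  next
    case c
    show False
    proof (cases xs2)
      case Nil
      hence "sublist (replicate t 0) x'" using c by auto
      thus False using assms by simp
    next
      case (Cons a r)
      hence "a = c" using c by auto
      moreover have "a \<in> set (replicate t 0)" using c Cons by simp
      ultimately show False using assms by simp
    qed
  qed
qed

lemma zero_step:
  assumes t: "t \<ge> 1" and m: "m \<ge> t" and k: "k \<ge> 1"
  shows "(\<Sum>d=1..t. (k-1) * card (av k (m-d) (replicate t 0))) \<le> card (av k m (replicate t 0))"
proof -
  define z where "z = replicate t (0::nat)"
  define h where "h = (\<lambda>(d::nat,(x'::nat list,c::nat)). x' @ c # replicate (d-1) 0)"
  define B where "B d = av k (m-d) z \<times> ({..<k} - {0})" for d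
  have fS: "finite (Sigma {1..t} B)" by (auto simp: B_def fin_av)
  have "(\<Sum>d=1..t. (k-1) * card (av k (m-d) z)) = (\<Sum>d=1..t. card (B d))"
    using k by (intro sum.cong) (auto simp: B_def card_cartesian_product)
  also have "\<dots> = card (Sigma {1..t} B)" by (rule card_SigmaI[symmetric]) (auto simp: B_def fin_av)
  also have "\<dots> \<le> card (av k m z)"
  proof (rule card_inj_on_le)
    show "finite (av k m z)" by (rule fin_av)
    show "h ` Sigma {1..t} B \<subseteq> av k m z"
    proof
      fix w assume "w \<in> h ` Sigma {1..t} B"
      then obtain d x' c where d: "d \<in> {1..t}" and x': "x' \<in> av k (m-d) z"
        and c: "c \<in> {..<k} - {0}" and w: "w = x' @ c # replicate (d-1) 0"
        by (auto simp: h_def B_def)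
      have "length w = m" using w x' d m by (auto simp: av_def words_def)
      moreover have "set w \<subseteq> {..<k}" using w x' c k by (auto simp: av_def words_def)
      moreover have "\<not> sublist z w" using w zero_ext[of t x' c d] x' c d
        by (auto simp: av_def z_def)
      ultimately show "w \<in> av k m z" by (simp add: av_def words_def)
    qed
    show "inj_on h (Sigma {1..t} B)"
    proof (rule inj_onI)
      fix p q assume p: "p \<in> Sigma {1..t} B" and q: "q \<in> Sigma {1..t} B" and e: "h p = h q"
      obtain d1 x1 c1 where p': "p = (d1,(x1,c1))" by (metis prod.exhaust)
      obtain d2 x2 c2 where q': "q = (d2,(x2,c2))" by (metis prod.exhaust)
      have c1: "c1 \<noteq> 0" and c2: "c2 \<noteq> 0" and d1: "d1 \<ge> 1" and d2: "d2 \<ge> 1"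
        and l1: "length x1 = m - d1" and l2: "length x2 = m - d2"
        using p q p' q' by (auto simp: B_def av_def words_def)
      have tw: "length (takeWhile (\<lambda>a. a = 0) (rev (x @ c # replicate (d-1) 0))) = d - 1"
        if "c \<noteq> 0" for x c d
        using that by (simp, subst takeWhile_append2) auto
      have E: "x1 @ c1 # replicate (d1-1) 0 = x2 @ c2 # replicate (d2-1) 0"
        using e p' q' by (simp add: h_def)
      have "d1 - 1 = d2 - 1" using tw[OF c1, of x1 d1] tw[OF c2, of x2 d2] E by metis
      hence dd: "d1 = d2" using d1 d2 by simp
      hence "x1 = x2 \<and> c1 = c2" using E l1 l2 by simp
      thus "p = q" using p' q' dd by simp
    qed
  qed
  finally show ?thesis by (simp add: z_def)
qed

lemma avoid_le:
  assumes u: "u \<in> words k t" and t: "t \<ge> 1" and k: "k \<ge> 1"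
  shows "card (av k m u) \<le> card (av k m (replicate t 0))"
proof (induction m rule: less_induct)
  case (less m)
  have lu: "length u = t" using u by (simp add: words_def)
  show ?case
  proof (cases "m < t")
    case True
    have "av k m u = words k m" "av k m (replicate t 0) = words k m"
      using True lu sublist_length_le by (fastforce simp: av_def words_def)+
    thus ?thesis by simp
  next
    case False
    hence mt: "m \<ge> t" by simp
    have "card (av k m u) \<le> (\<Sum>d=1..t. (k-1) * card (av k (m-d) u))"
      by (rule avoid_step[OF u t mt])
    also have "\<dots> \<le> (\<Sum>d=1..t. (k-1) * card (av k (m-d) (replicate t 0)))"
      using mt by (intro sum_mono mult_le_mono2 less.IH) auto
    also have "\<dots> \<le> card (av k m (replicate t 0))" by (rule zero_step[OF t mt k])
    finally show ?thesis .
  qed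
qed

lemma decomp:
  assumes w: "w \<in> words k n" and cl: "closed_by w u" and lu: "length u = t"
    and n: "n \<ge> 2 * t" and t: "t \<ge> 1"
  shows "u \<in> words k t \<and> w = u @ take (n - 2*t) (drop t w) @ u
         \<and> take (n - 2*t) (drop t w) \<in> av k (n - 2*t) u"
proof -
  have lw: "length w = n" and sw: "set w \<subseteq> {..<k}" using w by (auto simp: words_def)
  have pre: "prefix u w" and suf: "suffix u w" and oc: "occ u w = 2"
    using cl by (auto simp: closed_by_def is_border_def strict_prefix_def strict_suffix_def)
  define x where "x = take (n - 2*t) (drop t w)"
  obtain r where wr: "w = u @ r" using pre by (auto simp: prefix_def)
  hence tu: "take t w = u" using lu by simp
  obtain l where wl: "w = l @ u" using suf by (auto simp: suffix_def)
  have "length l = n - t" using wl lw lu by simp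
  hence du: "drop (n - t) w = u" using wl by simp
  have "w = take t w @ drop t w" by simp
  also have "drop t w = x @ drop (n - 2*t) (drop t w)" unfolding x_def by (rule append_take_drop_id[symmetric])
  also have "drop (n - 2*t) (drop t w) = drop (n - t) w" using n by (simp add: add.commute)
  finally have wx: "w = u @ x @ u" using tu du by simp
  have su: "set u \<subseteq> {..<k}" using sw wx by auto
  have lx: "length x = n - 2*t" using lw n by (simp add: x_def)
  have sx: "set x \<subseteq> {..<k}" using sw wx by auto
  have nx: "\<not> sublist u x"
  proof
    assume "sublist u x"
    then obtain p q where xpq: "x = p @ u @ q" by (auto simp: sublist_def)
    define S where "S = {i. i + length u \<le> length w \<and> take (length u) (drop i w) = u}"
    have lp: "length p + t \<le> n - 2*t" using lx xpq lu by simp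
    have "{0, t + length p, n - t} \<subseteq> S"
    proof -
      have "0 \<in> S" using wx lu by (simp add: S_def)
      moreover have "n - t \<in> S" using lw du lu n by (simp add: S_def)
      moreover have "t + length p \<in> S"
      proof -
        have "drop (t + length p) w = u @ q @ u" using wx xpq lu by simp
        thus ?thesis using lp lu lw n by (simp add: S_def)
      qed
      ultimately show ?thesis by simp
    qed
    moreover have "finite S" unfolding S_def by (rule finite_subset[of _ "{..length w}"]) auto
    ultimately have "card {0, t + length p, n - t} \<le> card S" by (rule card_mono[rotated])
    moreover have "card {0, t + length p, n - t} = 3" using lp t n by auto
    moreover have "card S = 2" using oc by (simp add: occ_def S_def)
    ultimately show False by simp
  qed
  show ?thesis using su lu wx lx sx nx by (auto simp: words_def av_def x_def)
qed

theorem lemma15: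
  fixes n t k :: nat
  assumes "n \<ge> 2 * t" and "2 * t \<ge> 2" and "k \<ge> 2"
  shows "P2 k n t \<le> P k t * A k (n - 2 * t) (replicate t 0)"
proof -
  have t: "t \<ge> 1" and k: "k \<ge> 1" using assms by auto
  define U where "U = {u \<in> words k t. privileged u}"
  define S where "S = {w \<in> words k n. privileged w \<and>
      (\<exists>u. length u = t \<and> privileged u \<and> closed_by w u)}"
  define f where "f = (\<lambda>(u::nat list, x::nat list). u @ x @ u)"
  have fU: "finite U" using fin_words[of k t] by (auto simp: U_def)
  have fS: "finite (Sigma U (\<lambda>u. av k (n - 2*t) u))" using fU by (auto simp: fin_av)
  have sub: "S \<subseteq> f ` Sigma U (\<lambda>u. av k (n - 2*t) u)"
  proof
    fix w assume "w \<in> S"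
    then obtain u where w: "w \<in> words k n" and lu: "length u = t" and pu: "privileged u"
      and cl: "closed_by w u" by (auto simp: S_def)
    from decomp[OF w cl lu assms(1) t] pu
    show "w \<in> f ` Sigma U (\<lambda>u. av k (n - 2*t) u)"
      by (auto simp: U_def f_def intro!: image_eqI[where x="(u, take (n - 2*t) (drop t w))"])
  qed
  have "P2 k n t = card S" by (simp add: P2_def S_def)
  also have "\<dots> \<le> card (f ` Sigma U (\<lambda>u. av k (n - 2*t) u))"
    using sub fS by (intro card_mono) auto
  also have "\<dots> \<le> card (Sigma U (\<lambda>u. av k (n - 2*t) u))" using fS card_image_le by blast
  also have "\<dots> = (\<Sum>u\<in>U. card (av k (n - 2*t) u))" using fU by (simp add: fin_av)
  also have "\<dots> \<le> (\<Sum>u\<in>U. card (av k (n - 2*t) (replicate t 0)))"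
    by (intro sum_mono avoid_le t k) (simp add: U_def)
  also have "\<dots> = P k t * A k (n - 2 * t) (replicate t 0)"
    by (simp add: P_def U_def A_av)
  finally show ?thesis .
qed

end
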